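(* Fix $\alpha\in(0,1)$. Let $X_i$ take values $-1,0,1$ with probabilities $\frac{1-\alpha}{2-\alpha},\ \frac{\alpha}{2-\alpha},\ \frac{1-\alpha}{2-\alpha}$ respectively, and $Y_i=X_i+\epsilon_i$ with $\epsilon_i\mid X_i\sim\mathrm{Uniform}([-2|X_i|,2|X_i|])$ (so $\epsilon_i=0$ when $X_i=0$), with $(X_i,Y_i)$, $i=1,\ldots,n+1$, i.i.d. Let $V(x,y)=|y-x|$, take the localizer $H_{i,j}=\mathbb 1\{|X_j-X_i|\le 1.5\}$, and use $\tilde\alpha=\alpha$ without tuning. Then, as $n\to\infty$, $\mathbb P\{V_{n+1}\le Q(\alpha;\hat{\mathcal F})\}\to\frac{\alpha}{2-\alpha}=1-\frac{2(1-\alpha)}{2-\alpha}$, i.e. the coverage falls short of $\alpha$ asymptotically by $\frac{\alpha(1-\alpha)}{2-\alpha}$.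
   Context: $p^H_{i,j}=H_{i,j}/\sum_{k=1}^{n+1}H_{i,k}$; $V_i=V(X_i,Y_i)$; $\hat{\mathcal F}=\sum_{j=1}^{n}p^H_{n+1,j}\delta_{V_j}+p^H_{n+1,n+1}\delta_{\infty}$, where $\delta_v$ is the point mass at $v$. For a probability distribution $\mathcal F$ on $\mathbb R\cup\{\infty\}$ and $a\in[0,1]$, $Q(a;\mathcal F)=\inf\{t:\mathbb P_{T\sim\mathcal F}(T\le t)\ge a\}$. *)

theory Defs
  imports "HOL-Probability.Probability"
begin

definition score :: "real \<Rightarrow> real \<Rightarrow> real" where
  "score x y = \<bar>y - x\<bar>"

definition loc :: "real \<Rightarrow> real \<Rightarrow> real" where
  "loc xi xj = (if \<bar>xj - xi\<bar> \<le> 3/2 then 1 else 0)"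

definition pH :: "(real \<Rightarrow> real \<Rightarrow> real) \<Rightarrow> (nat \<Rightarrow> real) \<Rightarrow> nat \<Rightarrow> nat \<Rightarrow> nat \<Rightarrow> real" where
  "pH H x n i j = H (x i) (x j) / (\<Sum>k=1..n+1. H (x i) (x k))"

definition discr_quantile :: "real \<Rightarrow> (nat \<Rightarrow> ereal) \<Rightarrow> (nat \<Rightarrow> real) \<Rightarrow> nat set \<Rightarrow> ereal" where
  "discr_quantile a pts w I = Inf {t. (\<Sum>j\<in>I. if pts j \<le> t then w j else 0) \<ge> a}"

definition Qhat :: "(real \<Rightarrow> real \<Rightarrow> real) \<Rightarrow> real \<Rightarrow> (nat \<Rightarrow> real) \<Rightarrow> (nat \<Rightarrow> real) \<Rightarrow> nat \<Rightarrow> ereal" where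
  "Qhat H a x v n = discr_quantile a
      (\<lambda>j. if j = n + 1 then \<infinity> else ereal (v j)) (pH H x n (n+1)) {1..n+1}"

end

theory Submission
  imports Defs
begin


definition gZ :: "real \<Rightarrow> real \<Rightarrow> real \<Rightarrow> real \<Rightarrow> real \<Rightarrow> real" where
  "gZ a s d x y = loc s x * ((if score x y \<le> d then 1 else 0) - a)"

lemma gZ_meas[measurable]: "(\<lambda>p. gZ a s d (fst p) (snd p)) \<in> borel_measurable (borel \<Otimes>\<^sub>M borel)"
  unfolding gZ_def loc_def score_def by measurable

lemma quantile_char:
  fixes v :: "nat \<Rightarrow> real" and w :: "nat \<Rightarrow> real" and a v0 :: real
  assumes w: "\<And>j. w j \<ge> 0" and a: "a > 0"
  shows "(ereal v0 \<le> discr_quantile a (\<lambda>j. if j = n + 1 then \<infinity> else ereal (v j)) w {1..n+1})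
     \<longleftrightarrow> (\<Sum>j\<in>{1..n}. if v j < v0 then w j else 0) < a"
proof
  let ?pts = "(\<lambda>j. if j = n + 1 then \<infinity> else ereal (v j))"
  assume le: "ereal v0 \<le> discr_quantile a ?pts w {1..n+1}"
  show "(\<Sum>j\<in>{1..n}. if v j < v0 then w j else 0) < a"
  proof (rule ccontr)
    assume "\<not> ?thesis"
    hence ge: "(\<Sum>j\<in>{1..n}. if v j < v0 then w j else 0) \<ge> a" by simp
    define J where "J = {j\<in>{1..n}. v j < v0}"
    have Jne: "J \<noteq> {}"
    proof
      assume "J = {}"
      hence "(\<Sum>j\<in>{1..n}. if v j < v0 then w j else 0) = 0"
        unfolding J_def by (intro sum.neutral) auto
      with ge a show False by simp
    qed
    have fJ: "finite J" unfolding J_def by simp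
    define m where "m = Max (v ` J)"
    have mlt: "m < v0" unfolding m_def using fJ Jne by (subst Max_less_iff) (auto simp: J_def)
    have mge: "\<And>j. j \<in> J \<Longrightarrow> v j \<le> m" unfolding m_def using fJ by auto
    have "(\<Sum>j\<in>{1..n}. if v j < v0 then w j else 0) \<le> (\<Sum>j\<in>{1..n}. if ?pts j \<le> ereal m then w j else 0)"
      by (intro sum_mono) (auto simp: w mge J_def)
    also have "\<dots> \<le> (\<Sum>j\<in>{1..n+1}. if ?pts j \<le> ereal m then w j else 0)"
      by (intro sum_mono2) (auto simp: w)
    finally have "ereal m \<in> {t. (\<Sum>j\<in>{1..n+1}. if ?pts j \<le> t then w j else 0) \<ge> a}"
      using ge by simp
    hence "discr_quantile a ?pts w {1..n+1} \<le> ereal m"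
      unfolding discr_quantile_def by (rule Inf_lower)
    with le have "ereal v0 \<le> ereal m" by (rule order.trans)
    with mlt show False by simp
  qed
next
  let ?pts = "(\<lambda>j. if j = n + 1 then \<infinity> else ereal (v j))"
  assume lt: "(\<Sum>j\<in>{1..n}. if v j < v0 then w j else 0) < a"
  show "ereal v0 \<le> discr_quantile a ?pts w {1..n+1}"
    unfolding discr_quantile_def
  proof (rule Inf_greatest)
    fix t assume t: "t \<in> {t. (\<Sum>j\<in>{1..n+1}. if ?pts j \<le> t then w j else 0) \<ge> a}"
    show "ereal v0 \<le> t"
    proof (rule ccontr)
      assume "\<not> ereal v0 \<le> t"
      hence tl: "t < ereal v0" by simp
      have "(\<Sum>j\<in>{1..n+1}. if ?pts j \<le> t then w j else 0) = (\<Sum>j\<in>{1..n}. if ?pts j \<le> t then w j else 0)"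
      proof -
        have e: "{1..n+1} = insert (n+1) {1..n}" by auto
        have "\<not> \<infinity> \<le> t" using tl by auto
        thus ?thesis unfolding e by (subst sum.insert) (auto intro!: sum.cong)
      qed
      also have "\<dots> \<le> (\<Sum>j\<in>{1..n}. if v j < v0 then w j else 0)"
      proof (intro sum_mono)
        fix j assume j: "j \<in> {1..n}"
        show "(if ?pts j \<le> t then w j else 0) \<le> (if v j < v0 then w j else 0)"
          using j tl w[of j] by (auto dest: order.strict_trans1)
      qed
      finally show False using t lt by simp
    qed
  qed
qed

locale S = prob_space M for M :: "'w measure" +
  fixes X Y :: "nat \<Rightarrow> 'w \<Rightarrow> real" and \<alpha> :: real
  assumes alpha: "0 < \<alpha>" "\<alpha> < 1"
    and meas[measurable]: "\<And>i. X i \<in> borel_measurable M" "\<And>i. Y i \<in> borel_measurable M"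
    and indep: "indep_vars (\<lambda>_. borel \<Otimes>\<^sub>M borel) (\<lambda>i \<omega>. (X i \<omega>, Y i \<omega>)) UNIV"
    and Xm1: "\<And>i. measure M {\<omega>\<in>space M. X i \<omega> = -1} = (1 - \<alpha>) / (2 - \<alpha>)"
    and X0: "\<And>i. measure M {\<omega>\<in>space M. X i \<omega> = 0} = \<alpha> / (2 - \<alpha>)"
    and X1: "\<And>i. measure M {\<omega>\<in>space M. X i \<omega> = 1} = (1 - \<alpha>) / (2 - \<alpha>)"
    and eps0: "\<And>i. measure M {\<omega>\<in>space M. X i \<omega> = 0 \<and> Y i \<omega> - X i \<omega> = 0}
                   = measure M {\<omega>\<in>space M. X i \<omega> = 0}"
    and epsU: "\<And>i x A. x \<in> {-1, 1} \<Longrightarrow> A \<in> sets borel \<Longrightarrow>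
                 measure M {\<omega>\<in>space M. X i \<omega> = x \<and> Y i \<omega> - X i \<omega> \<in> A}
                 = measure M {\<omega>\<in>space M. X i \<omega> = x}
                   * (measure lborel (A \<inter> {-2*\<bar>x\<bar>..2*\<bar>x\<bar>}) / (4*\<bar>x\<bar>))"
begin

definition "P1 = (1 - \<alpha>) / (2 - \<alpha>)"

lemma P1_pos: "P1 > 0" "P1 \<le> 1" using alpha by (auto simp: P1_def)

lemma small_prob:
  assumes s: "s \<in> {-1,1}" and d: "0 < d" "d \<le> 2"
  shows "prob {\<omega>\<in>space M. X i \<omega> = s \<and> score (X i \<omega>) (Y i \<omega>) \<le> d} = P1 * d / 2"
proof -
  have as: "\<bar>s\<bar> = 1" using s by auto
  have PS: "prob {\<omega>\<in>space M. X i \<omega> = s} = P1" using s Xm1 X1 by (auto simp: P1_def)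
  have eq: "{\<omega>\<in>space M. X i \<omega> = s \<and> score (X i \<omega>) (Y i \<omega>) \<le> d}
      = {\<omega>\<in>space M. X i \<omega> = s \<and> Y i \<omega> - X i \<omega> \<in> {-d..d}}"
    by (auto simp: score_def abs_le_iff)
  have I: "{-d..d} \<inter> {-2*\<bar>s\<bar>..2*\<bar>s\<bar>} = {-d..d}" using d as by auto
  have L: "measure lborel {-d..d} = 2 * d" using d by simp
  have "prob {\<omega>\<in>space M. X i \<omega> = s \<and> Y i \<omega> - X i \<omega> \<in> {-d..d}}
      = prob {\<omega>\<in>space M. X i \<omega> = s} * (measure lborel ({-d..d} \<inter> {-2*\<bar>s\<bar>..2*\<bar>s\<bar>}) / (4*\<bar>s\<bar>))"
    by (rule epsU[OF s]) simp
  also have "\<dots> = P1 * (2 * d / 4)" using d by (simp add: PS as min_def max_def)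
  finally show ?thesis unfolding eq by simp
qed

definition "Z s d j \<omega> = gZ \<alpha> s d (X j \<omega>) (Y j \<omega>)"

lemma Z_meas[measurable]: "Z s d j \<in> borel_measurable M"
  unfolding Z_def gZ_def loc_def score_def by measurable

lemma Z_indep: "indep_vars (\<lambda>_. borel) (Z s d) I"
proof -
  have "indep_vars (\<lambda>_. borel) (\<lambda>i \<omega>. (\<lambda>p. gZ \<alpha> s d (fst p) (snd p)) (X i \<omega>, Y i \<omega>)) UNIV"
    by (rule indep_vars_compose2[OF indep]) measurable
  hence "indep_vars (\<lambda>_. borel) (Z s d) UNIV" by (simp add: Z_def[abs_def])
  thus ?thesis by (rule indep_vars_subset) auto
qed

lemma Z_bound: "Z s d j \<omega> \<in> {-1..1}"
  using alpha by (auto simp: Z_def gZ_def loc_def)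

lemma Z_exp:
  assumes s: "s \<in> {-1,1}" and d: "0 < d" "d \<le> 2"
  shows "expectation (Z s d j) \<ge> P1 * d / 2"
proof -
  define B where "B = {\<omega>\<in>space M. \<bar>X j \<omega> - s\<bar> \<le> 3/2}"
  define C where "C = {\<omega>\<in>space M. \<bar>X j \<omega> - s\<bar> \<le> 3/2 \<and> score (X j \<omega>) (Y j \<omega>) \<le> d}"
  have [measurable]: "B \<in> sets M" "C \<in> sets M" unfolding B_def C_def score_def by measurable
  have "expectation (Z s d j) = expectation (\<lambda>\<omega>. indicator C \<omega> - \<alpha> * indicator B \<omega>)"
    by (intro Bochner_Integration.integral_cong) (auto simp: Z_def gZ_def loc_def B_def C_def indicator_def abs_minus_commute)
  also have "\<dots> = prob C - \<alpha> * prob B"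
    by (subst Bochner_Integration.integral_diff) (auto intro!: integrable_real_indicator simp: less_top[symmetric])
  finally have E: "expectation (Z s d j) = prob C - \<alpha> * prob B" .
  define C0 where "C0 = {\<omega>\<in>space M. X j \<omega> = 0 \<and> Y j \<omega> - X j \<omega> = 0}"
  define C1 where "C1 = {\<omega>\<in>space M. X j \<omega> = s \<and> score (X j \<omega>) (Y j \<omega>) \<le> d}"
  have [measurable]: "C0 \<in> sets M" "C1 \<in> sets M" unfolding C0_def C1_def score_def by measurable
  have "prob C0 + prob C1 = prob (C0 \<union> C1)"
  proof (rule finite_measure_Union[symmetric])
    show "C0 \<inter> C1 = {}" using s by (auto simp: C0_def C1_def)
  qed simp_all
  also have "\<dots> \<le> prob C"
    by (rule finite_measure_mono) (use s d in \<open>auto simp: C0_def C1_def C_def score_def\<close>)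
  finally have Cge: "prob C \<ge> \<alpha>/(2-\<alpha>) + P1 * d / 2"
    using eps0[of j] X0[of j] small_prob[OF s d, of j] by (simp add: C0_def C1_def)
  define Bm where "Bm = {\<omega>\<in>space M. X j \<omega> = -s}"
  have [measurable]: "Bm \<in> sets M" unfolding Bm_def by measurable
  have "prob B + prob Bm = prob (B \<union> Bm)"
  proof (rule finite_measure_Union[symmetric])
    show "B \<inter> Bm = {}" using s by (auto simp: B_def Bm_def)
  qed simp_all
  also have "\<dots> \<le> 1" by simp
  finally have Ble0: "prob B + prob Bm \<le> 1" .
  have PBm: "prob Bm = P1"
  proof (cases "s = 1")
    case True thus ?thesis using Xm1[of j] by (simp add: Bm_def P1_def)
  next
    case False hence "s = -1" using s by auto
    thus ?thesis using X1[of j] by (simp add: Bm_def P1_def)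
  qed
  have Ble: "prob B \<le> 1 - P1" using Ble0 PBm by linarith
  have e1: "1 - P1 = 1 / (2 - \<alpha>)" using alpha by (simp add: P1_def field_simps)
  have "\<alpha> * prob B \<le> \<alpha> * (1 - P1)" using Ble alpha by (intro mult_left_mono) auto
  hence "\<alpha> * prob B \<le> \<alpha> / (2 - \<alpha>)" unfolding e1 by simp
  with Cge E show ?thesis by simp
qed

lemma exp_neg_le_inv: "x > 0 \<Longrightarrow> exp (-x) \<le> 1 / (x::real)"
proof -
  assume x: "x > 0"
  have "x \<le> exp x" using exp_ge_add_one_self[of x] by linarith
  hence "1 / exp x \<le> 1 / x" using x by (intro divide_left_mono) auto
  thus ?thesis by (simp add: exp_minus field_simps)
qed

lemma tail:
  assumes s: "s \<in> {-1,1}" and d: "0 < d" "d \<le> 2"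
  shows "(\<lambda>n. prob {\<omega>\<in>space M. (\<Sum>j\<in>{1..n}. Z s d j \<omega>) < \<alpha>}) \<longlonglongrightarrow> 0"
proof -
  define c where "c = P1 * d / 2"
  have c: "c > 0" using P1_pos d by (simp add: c_def)
  define bnd where "bnd = (\<lambda>n::nat. (8 / c\<^sup>2) * inverse (real n))"
  have lim: "bnd \<longlonglongrightarrow> 0" unfolding bnd_def
    using tendsto_mult_right_zero[OF lim_inverse_n, of "8 / c\<^sup>2"] by simp
  obtain N :: nat where N: "2*\<alpha>/c < real N" using reals_Archimedean2 by blast
  have ev: "eventually (\<lambda>n. real n * c \<ge> 2*\<alpha> \<and> n \<ge> 1) sequentially"
    unfolding eventually_sequentially
  proof (intro exI[of _ "max 1 N"] allI impI)
    fix n :: nat assume "max 1 N \<le> n"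
    hence n1: "real N \<le> real n" "1 \<le> n" by auto
    with N have "2*\<alpha>/c < real n" by linarith
    hence "2*\<alpha> < real n * c" using c by (simp add: divide_less_eq)
    thus "2*\<alpha> \<le> real n * c \<and> 1 \<le> n" using n1 by simp
  qed
  have "eventually (\<lambda>n. prob {\<omega>\<in>space M. (\<Sum>j\<in>{1..n}. Z s d j \<omega>) < \<alpha>} \<le> bnd n) sequentially"
  proof (rule eventually_mono[OF ev])
    fix n :: nat assume n: "real n * c \<ge> 2*\<alpha> \<and> n \<ge> 1"
    define \<mu> where "\<mu> = (\<Sum>i\<in>{1..n}. expectation (Z s d i))"
    interpret H: Hoeffding_ineq M "{1..n}" "Z s d" "\<lambda>_. -1" "\<lambda>_. 1" \<mu>
    proof unfold_locales
      show "finite {1..n}" by simp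
      show "indep_vars (\<lambda>_. borel) (Z s d) {1..n}" by (rule Z_indep)
      show "\<mu> \<equiv> \<Sum>i\<in>{1..n}. expectation (Z s d i)" by (simp add: \<mu>_def)
    next
      fix i show "AE x in M. Z s d i x \<in> {-1..1}" using Z_bound by simp
    qed
    have mu: "\<mu> \<ge> real n * c"
    proof -
      have "(\<Sum>i\<in>{1..n}. c) \<le> \<mu>" unfolding \<mu>_def c_def
        by (intro sum_mono Z_exp[OF s d])
      thus ?thesis by simp
    qed
    have npos: "real n > 0" using n by simp
    have a0: "\<alpha> > 0" using alpha by simp
    have "prob {\<omega>\<in>space M. (\<Sum>j\<in>{1..n}. Z s d j \<omega>) < \<alpha>}
        \<le> prob {\<omega>\<in>space M. (\<Sum>j\<in>{1..n}. Z s d j \<omega>) \<le> \<mu> - (\<mu> - \<alpha>)}"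
    proof (rule finite_measure_mono)
      show "{\<omega>\<in>space M. (\<Sum>j\<in>{1..n}. Z s d j \<omega>) \<le> \<mu> - (\<mu> - \<alpha>)} \<in> sets M" by measurable
    qed auto
    also have "\<dots> \<le> exp (-2 * (\<mu> - \<alpha>)\<^sup>2 / (\<Sum>i\<in>{1..n}. ((1::real) - -1)\<^sup>2))"
      by (rule H.Hoeffding_ineq_le) (use n mu a0 in auto)
    also have "(\<Sum>i\<in>{1..n}. ((1::real) - -1)\<^sup>2) = 4 * real n" by simp
    also have "exp (-2 * (\<mu> - \<alpha>)\<^sup>2 / (4 * real n)) \<le> exp (- (real n * c\<^sup>2 / 8))"
    proof -
      have h1: "real n * c / 2 \<le> \<mu> - \<alpha>" using n mu by linarith
      have h0: "0 \<le> real n * c / 2" using c npos by simp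
      have "(real n * c / 2)\<^sup>2 \<le> (\<mu> - \<alpha>)\<^sup>2" by (rule power_mono[OF h1 h0])
      hence "2 * (real n * c / 2)\<^sup>2 / (4 * real n) \<le> 2 * (\<mu> - \<alpha>)\<^sup>2 / (4 * real n)"
        using npos by (intro divide_right_mono) auto
      moreover have "2 * (real n * c / 2)\<^sup>2 / (4 * real n) = real n * c\<^sup>2 / 8"
        using npos by (simp add: power2_eq_square field_simps)
      ultimately show ?thesis by simp
    qed
    also have "\<dots> \<le> 1 / (real n * c\<^sup>2 / 8)"
      by (rule exp_neg_le_inv) (use npos c in simp)
    also have "\<dots> = bnd n" unfolding bnd_def using npos c by (simp add: field_simps)
    finally show "prob {\<omega>\<in>space M. (\<Sum>j\<in>{1..n}. Z s d j \<omega>) < \<alpha>} \<le> bnd n" .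
  qed
  thus ?thesis
    by (intro tendsto_sandwich[OF _ _ tendsto_const lim]) auto
qed

end


context S begin
definition "V i \<omega> = score (X i \<omega>) (Y i \<omega>)"
definition "D n \<omega> = (\<Sum>k\<in>{1..n+1}. loc (X (n+1) \<omega>) (X k \<omega>))"

lemma loc_nonneg: "loc a b \<ge> 0" by (simp add: loc_def)
lemma loc_self: "loc a a = 1" by (simp add: loc_def)

lemma D_ge1: "D n \<omega> \<ge> 1"
proof -
  have e: "{1..n+1} = insert (n+1) {1..n}" by auto
  have "(\<Sum>k\<in>{1..n}. loc (X (n+1) \<omega>) (X k \<omega>)) \<ge> 0" by (intro sum_nonneg) (simp add: loc_nonneg)
  thus ?thesis unfolding D_def e by (simp add: loc_self)
qed

lemma E_eq: "{\<omega>\<in>space M. ereal (score (X (n+1) \<omega>) (Y (n+1) \<omega>))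
              \<le> Qhat loc \<alpha> (\<lambda>i. X i \<omega>) (\<lambda>i. score (X i \<omega>) (Y i \<omega>)) n}
   = {\<omega>\<in>space M. (\<Sum>j\<in>{1..n}. if V j \<omega> < V (n+1) \<omega> then loc (X (n+1) \<omega>) (X j \<omega>) else 0) < \<alpha> * D n \<omega>}"
proof -
  { fix \<omega>
    have Dp: "D n \<omega> > 0" using D_ge1[of n \<omega>] by simp
    have w: "\<And>j. pH loc (\<lambda>i. X i \<omega>) n (n+1) j \<ge> 0"
      unfolding pH_def by (intro divide_nonneg_nonneg sum_nonneg loc_nonneg)
    have "(ereal (score (X (n+1) \<omega>) (Y (n+1) \<omega>))
              \<le> Qhat loc \<alpha> (\<lambda>i. X i \<omega>) (\<lambda>i. score (X i \<omega>) (Y i \<omega>)) n)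
        \<longleftrightarrow> (\<Sum>j\<in>{1..n}. if V j \<omega> < V (n+1) \<omega> then pH loc (\<lambda>i. X i \<omega>) n (n+1) j else 0) < \<alpha>"
      unfolding Qhat_def V_def by (rule quantile_char[OF w alpha(1)])
    also have "(\<Sum>j\<in>{1..n}. if V j \<omega> < V (n+1) \<omega> then pH loc (\<lambda>i. X i \<omega>) n (n+1) j else 0)
      = (\<Sum>j\<in>{1..n}. if V j \<omega> < V (n+1) \<omega> then loc (X (n+1) \<omega>) (X j \<omega>) else 0) / D n \<omega>"
      unfolding sum_divide_distrib by (intro sum.cong) (auto simp: pH_def D_def)
    also have "\<dots> < \<alpha> \<longleftrightarrow> (\<Sum>j\<in>{1..n}. if V j \<omega> < V (n+1) \<omega> then loc (X (n+1) \<omega>) (X j \<omega>) else 0) < \<alpha> * D n \<omega>"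
      using Dp by (simp add: divide_less_eq)
    finally have "(ereal (score (X (n+1) \<omega>) (Y (n+1) \<omega>))
              \<le> Qhat loc \<alpha> (\<lambda>i. X i \<omega>) (\<lambda>i. score (X i \<omega>) (Y i \<omega>)) n)
      \<longleftrightarrow> (\<Sum>j\<in>{1..n}. if V j \<omega> < V (n+1) \<omega> then loc (X (n+1) \<omega>) (X j \<omega>) else 0) < \<alpha> * D n \<omega>" . }
  thus ?thesis by blast
qed

lemma E_meas: "{\<omega>\<in>space M. (\<Sum>j\<in>{1..n}. if V j \<omega> < V (n+1) \<omega> then loc (X (n+1) \<omega>) (X j \<omega>) else 0) < \<alpha> * D n \<omega>} \<in> sets M"
  unfolding V_def D_def score_def loc_def by measurable

definition "E n = {\<omega>\<in>space M. (\<Sum>j\<in>{1..n}. if V j \<omega> < V (n+1) \<omega> then loc (X (n+1) \<omega>) (X j \<omega>) else 0) < \<alpha> * D n \<omega>}"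

lemma E_sets[measurable]: "E n \<in> sets M" unfolding E_def by (rule E_meas)

lemma V_nonneg: "V i \<omega> \<ge> 0" by (simp add: V_def score_def)

lemma lower: "prob (E n) \<ge> \<alpha> / (2 - \<alpha>)"
proof -
  define A0 where "A0 = {\<omega>\<in>space M. X (n+1) \<omega> = 0 \<and> Y (n+1) \<omega> - X (n+1) \<omega> = 0}"
  have "A0 \<subseteq> E n"
  proof
    fix \<omega> assume a: "\<omega> \<in> A0"
    have "V (n+1) \<omega> = 0" using a by (simp add: A0_def V_def score_def)
    hence "(\<Sum>j\<in>{1..n}. if V j \<omega> < V (n+1) \<omega> then loc (X (n+1) \<omega>) (X j \<omega>) else 0) = 0"
    proof -
      have "\<And>j. \<not> V j \<omega> < 0" using V_nonneg by (simp add: not_less)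
      thus ?thesis using \<open>V (n+1) \<omega> = 0\<close> by simp
    qed
    moreover have "\<alpha> * D n \<omega> > 0" using alpha D_ge1[of n \<omega>] by simp
    ultimately show "\<omega> \<in> E n" using a by (simp add: E_def A0_def)
  qed
  hence "prob A0 \<le> prob (E n)" by (rule finite_measure_mono[OF _ E_sets])
  thus ?thesis using eps0[of "n+1"] X0[of "n+1"] by (simp add: A0_def)
qed

lemma null: "prob {\<omega>\<in>space M. X i \<omega> \<notin> {-1,0,1}} = 0"
proof -
  define A where "A = {\<omega>\<in>space M. X i \<omega> = -1}"
  define B where "B = {\<omega>\<in>space M. X i \<omega> = 0}"
  define C where "C = {\<omega>\<in>space M. X i \<omega> = 1}"
  have [measurable]: "A \<in> sets M" "B \<in> sets M" "C \<in> sets M" unfolding A_def B_def C_def by measurable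
  have "prob (A \<union> B) = prob A + prob B"
  proof (rule finite_measure_Union)
    show "A \<inter> B = {}" by (auto simp: A_def B_def)
  qed simp_all
  moreover have "prob (A \<union> B \<union> C) = prob (A \<union> B) + prob C"
  proof (rule finite_measure_Union)
    show "(A \<union> B) \<inter> C = {}" by (auto simp: A_def B_def C_def)
  qed simp_all
  ultimately have "prob (A \<union> B \<union> C) = 1"
    using Xm1[of i] X0[of i] X1[of i] alpha unfolding A_def B_def C_def by (simp add: field_simps)
  moreover have "{\<omega>\<in>space M. X i \<omega> \<notin> {-1,0,1}} = space M - (A \<union> B \<union> C)"
    by (auto simp: A_def B_def C_def)
  moreover have "prob (space M - (A \<union> B \<union> C)) = 1 - prob (A \<union> B \<union> C)"
    by (rule prob_compl) simp
  ultimately show ?thesis by simp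
qed

lemma incl:
  assumes s: "s \<in> {-1,1}" and \<omega>: "\<omega> \<in> E n" "X (n+1) \<omega> = s" "V (n+1) \<omega> > d"
  shows "(\<Sum>j\<in>{1..n}. Z s d j \<omega>) < \<alpha>"
proof -
  have "(\<Sum>j\<in>{1..n}. Z s d j \<omega>) = (\<Sum>j\<in>{1..n}. loc s (X j \<omega>) * (if V j \<omega> \<le> d then 1 else 0)) - \<alpha> * (\<Sum>j\<in>{1..n}. loc s (X j \<omega>))"
    by (simp add: Z_def gZ_def V_def sum_subtractf sum_distrib_left right_diff_distrib mult.commute)
  also have "(\<Sum>j\<in>{1..n}. loc s (X j \<omega>) * (if V j \<omega> \<le> d then 1 else 0))
     \<le> (\<Sum>j\<in>{1..n}. if V j \<omega> < V (n+1) \<omega> then loc (X (n+1) \<omega>) (X j \<omega>) else 0)"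
    using \<omega> loc_nonneg by (intro sum_mono) auto
  also have "\<dots> < \<alpha> * D n \<omega>" using \<omega>(1) by (simp add: E_def)
  also have "D n \<omega> = (\<Sum>j\<in>{1..n}. loc s (X j \<omega>)) + 1"
  proof -
    have e: "{1..n+1} = insert (n+1) {1..n}" by auto
    show ?thesis unfolding D_def e using \<omega>(2) by (simp add: loc_self add.commute)
  qed
  finally show ?thesis by (simp add: algebra_simps)
qed

lemma upper:
  assumes d: "0 < d" "d \<le> 2"
  shows "prob (E n) \<le> \<alpha> / (2 - \<alpha>) + d + prob {\<omega>\<in>space M. (\<Sum>j\<in>{1..n}. Z 1 d j \<omega>) < \<alpha>}
             + prob {\<omega>\<in>space M. (\<Sum>j\<in>{1..n}. Z (-1) d j \<omega>) < \<alpha>}"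
proof -
  define N where "N = {\<omega>\<in>space M. X (n+1) \<omega> \<notin> {-1,0,1}}"
  define B where "B = {\<omega>\<in>space M. X (n+1) \<omega> = 0}"
  define F1 where "F1 = {\<omega>\<in>space M. X (n+1) \<omega> = 1 \<and> score (X (n+1) \<omega>) (Y (n+1) \<omega>) \<le> d}"
  define F2 where "F2 = {\<omega>\<in>space M. X (n+1) \<omega> = -1 \<and> score (X (n+1) \<omega>) (Y (n+1) \<omega>) \<le> d}"
  define T1 where "T1 = {\<omega>\<in>space M. (\<Sum>j\<in>{1..n}. Z 1 d j \<omega>) < \<alpha>}"
  define T2 where "T2 = {\<omega>\<in>space M. (\<Sum>j\<in>{1..n}. Z (-1) d j \<omega>) < \<alpha>}"
  have [measurable]: "N \<in> sets M" "B \<in> sets M" "F1 \<in> sets M" "F2 \<in> sets M" "T1 \<in> sets M" "T2 \<in> sets M"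
    unfolding N_def B_def F1_def F2_def T1_def T2_def score_def by measurable
  have sub: "E n \<subseteq> N \<union> B \<union> F1 \<union> F2 \<union> T1 \<union> T2"
  proof
    fix \<omega> assume w: "\<omega> \<in> E n"
    hence sp: "\<omega> \<in> space M" by (simp add: E_def)
    consider "X (n+1) \<omega> \<notin> {-1,0,1}" | "X (n+1) \<omega> = 0" | "X (n+1) \<omega> = 1" | "X (n+1) \<omega> = -1" by blast
    thus "\<omega> \<in> N \<union> B \<union> F1 \<union> F2 \<union> T1 \<union> T2"
    proof cases
      case 1 hence "\<omega> \<in> N" using sp by (simp add: N_def) thus ?thesis by blast
    next
      case 2 hence "\<omega> \<in> B" using sp by (simp add: B_def) thus ?thesis by blast
    next
      case 3
      show ?thesis
      proof (cases "V (n+1) \<omega> \<le> d")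
        case True hence "\<omega> \<in> F1" using sp 3 by (simp add: F1_def V_def) thus ?thesis by blast
      next
        case False hence "V (n+1) \<omega> > d" by simp
        hence "(\<Sum>j\<in>{1..n}. Z 1 d j \<omega>) < \<alpha>" using incl[of 1 \<omega> n d] w 3 by simp
        hence "\<omega> \<in> T1" using sp by (simp add: T1_def) thus ?thesis by blast
      qed
    next
      case 4
      show ?thesis
      proof (cases "V (n+1) \<omega> \<le> d")
        case True hence "\<omega> \<in> F2" using sp 4 by (simp add: F2_def V_def) thus ?thesis by blast
      next
        case False hence "V (n+1) \<omega> > d" by simp
        hence "(\<Sum>j\<in>{1..n}. Z (-1) d j \<omega>) < \<alpha>" using incl[of "-1" \<omega> n d] w 4 by simp
        hence "\<omega> \<in> T2" using sp by (simp add: T2_def) thus ?thesis by blast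
      qed
    qed
  qed
  have "prob (E n) \<le> prob (N \<union> B \<union> F1 \<union> F2 \<union> T1 \<union> T2)"
    using sub by (rule finite_measure_mono) measurable
  also have "\<dots> \<le> prob N + prob B + prob F1 + prob F2 + prob T1 + prob T2"
  proof -
    have "prob (N \<union> B \<union> F1 \<union> F2 \<union> T1 \<union> T2) \<le> prob (N \<union> B \<union> F1 \<union> F2 \<union> T1) + prob T2"
      by (rule measure_Un_le) measurable
    moreover have "prob (N \<union> B \<union> F1 \<union> F2 \<union> T1) \<le> prob (N \<union> B \<union> F1 \<union> F2) + prob T1"
      by (rule measure_Un_le) measurable
    moreover have "prob (N \<union> B \<union> F1 \<union> F2) \<le> prob (N \<union> B \<union> F1) + prob F2"
      by (rule measure_Un_le) measurable
    moreover have "prob (N \<union> B \<union> F1) \<le> prob (N \<union> B) + prob F1"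
      by (rule measure_Un_le) measurable
    moreover have "prob (N \<union> B) \<le> prob N + prob B"
      by (rule measure_Un_le) measurable
    ultimately show ?thesis by linarith
  qed
  also have "prob N = 0" unfolding N_def by (rule null)
  also have "prob B = \<alpha> / (2 - \<alpha>)" unfolding B_def by (rule X0)
  also have "prob F1 = P1 * d / 2" unfolding F1_def by (rule small_prob) (use d in auto)
  also have "prob F2 = P1 * d / 2" unfolding F2_def by (rule small_prob) (use d in auto)
  finally have fin: "prob (E n) \<le> 0 + \<alpha> / (2 - \<alpha>) + P1 * d / 2 + P1 * d / 2 + prob T1 + prob T2" .
  have "P1 * d \<le> 1 * d" using P1_pos d by (intro mult_right_mono) auto
  with fin show ?thesis unfolding T1_def T2_def by linarith
qed

lemma conv: "(\<lambda>n. prob (E n)) \<longlonglongrightarrow> \<alpha> / (2 - \<alpha>)"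
proof (rule LIMSEQ_I)
  fix r :: real assume r: "r > 0"
  define d where "d = min 2 (r/4)"
  have d: "0 < d" "d \<le> 2" "d \<le> r/4" using r by (auto simp: d_def)
  have t1: "eventually (\<lambda>n. prob {\<omega>\<in>space M. (\<Sum>j\<in>{1..n}. Z 1 d j \<omega>) < \<alpha>} < r/4) sequentially"
    using tail[of 1 d] d r by (auto dest: order_tendstoD(2)[where a="r/4"])
  have t2: "eventually (\<lambda>n. prob {\<omega>\<in>space M. (\<Sum>j\<in>{1..n}. Z (-1) d j \<omega>) < \<alpha>} < r/4) sequentially"
    using tail[of "-1" d] d r by (auto dest: order_tendstoD(2)[where a="r/4"])
  have "eventually (\<lambda>n. norm (prob (E n) - \<alpha> / (2 - \<alpha>)) < r) sequentially"
  proof (rule eventually_mono[OF eventually_conj[OF t1 t2]])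
    fix n assume h: "prob {\<omega>\<in>space M. (\<Sum>j\<in>{1..n}. Z 1 d j \<omega>) < \<alpha>} < r/4 \<and>
                     prob {\<omega>\<in>space M. (\<Sum>j\<in>{1..n}. Z (-1) d j \<omega>) < \<alpha>} < r/4"
    show "norm (prob (E n) - \<alpha> / (2 - \<alpha>)) < r"
      using upper[OF d(1,2), of n] lower[of n] h d by auto
  qed
  thus "\<exists>no. \<forall>n\<ge>no. norm (prob (E n) - \<alpha> / (2 - \<alpha>)) < r"
    by (simp add: eventually_sequentially)
qed

end

theorem mainTheorem6:
  fixes M :: "'w measure" and X Y :: "nat \<Rightarrow> 'w \<Rightarrow> real" and \<alpha> :: real
  assumes alpha: "0 < \<alpha>" "\<alpha> < 1"
    and P: "prob_space M"
    and meas: "\<And>i. X i \<in> borel_measurable M" "\<And>i. Y i \<in> borel_measurable M"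
    and indep: "prob_space.indep_vars M (\<lambda>_. borel \<Otimes>\<^sub>M borel) (\<lambda>i \<omega>. (X i \<omega>, Y i \<omega>)) UNIV"
    and Xm1: "\<And>i. measure M {\<omega>\<in>space M. X i \<omega> = -1} = (1 - \<alpha>) / (2 - \<alpha>)"
    and X0: "\<And>i. measure M {\<omega>\<in>space M. X i \<omega> = 0} = \<alpha> / (2 - \<alpha>)"
    and X1: "\<And>i. measure M {\<omega>\<in>space M. X i \<omega> = 1} = (1 - \<alpha>) / (2 - \<alpha>)"
    and eps0: "\<And>i. measure M {\<omega>\<in>space M. X i \<omega> = 0 \<and> Y i \<omega> - X i \<omega> = 0}
                   = measure M {\<omega>\<in>space M. X i \<omega> = 0}"
    and epsU: "\<And>i x A. x \<in> {-1, 1} \<Longrightarrow> A \<in> sets borel \<Longrightarrow>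
                 measure M {\<omega>\<in>space M. X i \<omega> = x \<and> Y i \<omega> - X i \<omega> \<in> A}
                 = measure M {\<omega>\<in>space M. X i \<omega> = x}
                   * (measure lborel (A \<inter> {-2*\<bar>x\<bar>..2*\<bar>x\<bar>}) / (4*\<bar>x\<bar>))"
  shows "(\<lambda>n. measure M {\<omega>\<in>space M.
            ereal (score (X (n+1) \<omega>) (Y (n+1) \<omega>))
              \<le> Qhat loc \<alpha> (\<lambda>i. X i \<omega>) (\<lambda>i. score (X i \<omega>) (Y i \<omega>)) n})
         \<longlonglongrightarrow> \<alpha> / (2 - \<alpha>)"
  proof -
  interpret S M X Y \<alpha>
    using assms by (simp add: S_def S_axioms_def)
  show ?thesis unfolding E_eq using conv by (simp add: E_def)
qed

end
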